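(* Let $\mathcal{G}\rightrightarrows M$ be a diffeological groupoid. Then the quotient groupoid $\mathcal{G}/(\mathcal{G},\mathcal{G})$, equipped with the quotient diffeology, is a diffeological groupoid and, together with the quotient map, is the abelianization of $\mathcal{G}$ in the category of diffeological groupoids.
   Context: A diffeological space is a set $X$ with a family of maps (plots) from open subsets of Euclidean spaces to $X$, containing constants, local in nature, and closed under precomposition with smooth maps; smooth maps send plots to plots. A diffeological groupoid is a groupoid object in diffeological spaces. For a surjection $q:X\to\tilde X$, the quotient diffeology consists of maps $P:U\to\tilde X$ that locally are constant or of the form $q\circ Q$ with $Q$ a plot of $X$; the subset diffeology on $Y\subset X$ consists of plots of $X$ with image in $Y$. The D-topology is the finest topology making all plots continuous. $(\mathcal{G},\mathcal{G})=\bigcup_x(\mathcal{G}_x,\mathcal{G}_x)$ is the union of the commutator subgroups of the isotropy groups $\mathcal{G}_x$. A groupoid is abelian if all isotropy groups are abelian. An abelianization of $\mathcal{G}\rightrightarrows M$ is an abelian diffeological groupoid $\mathcal{G}^{ab}\rightrightarrows M$ with a surjective smooth groupoid morphism $p:\mathcal{G}\to\mathcal{G}^{ab}$ covering $\mathrm{id}_M$ such that for every open (in the D-topology) $U\subset M$, every abelian diffeological groupoid $\mathcal{H}$ and every smooth morphism $\psi:\mathcal{G}|_U\to\mathcal{H}$ (restrictions carrying the subset diffeology) there is a unique smooth morphism $\tilde\psi:\mathcal{G}^{ab}|_U\to\mathcal{H}$ with $\tilde\psi\circ p|_U=\psi$. *)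

theory Defs
  imports "HOL-Analysis.Analysis"
begin

text \<open>R^n is represented as the set of real sequences vanishing from index n on.
  The type nat => real carries the product topology, whose subspace topology on
  euc n is the usual Euclidean topology of R^n.\<close>

definition euc :: "nat \<Rightarrow> (nat \<Rightarrow> real) set" where
  "euc n = {x. \<forall>i\<ge>n. x i = 0}"

definition open_euc :: "nat \<Rightarrow> (nat \<Rightarrow> real) set \<Rightarrow> bool" where
  "open_euc n U \<longleftrightarrow> U \<subseteq> euc n \<and> openin (top_of_set (euc n)) U"

definition partial_d :: "nat \<Rightarrow> ((nat \<Rightarrow> real) \<Rightarrow> real) \<Rightarrow> (nat \<Rightarrow> real) \<Rightarrow> real" where
  "partial_d i g x = deriv (\<lambda>t. g (x(i := x i + t))) 0"

primrec Ck :: "nat \<Rightarrow> nat \<Rightarrow> (nat \<Rightarrow> real) set \<Rightarrow> ((nat \<Rightarrow> real) \<Rightarrow> real) \<Rightarrow> bool" where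
  "Ck 0 m U g = continuous_on U g"
| "Ck (Suc k) m U g =
     (continuous_on U g \<and>
      (\<forall>i<m. \<forall>x\<in>U. (\<lambda>t. g (x(i := x i + t))) differentiable (at (0::real))) \<and>
      (\<forall>i<m. Ck k m U (partial_d i g)))"

definition smooth_fun :: "nat \<Rightarrow> (nat \<Rightarrow> real) set \<Rightarrow> ((nat \<Rightarrow> real) \<Rightarrow> real) \<Rightarrow> bool" where
  "smooth_fun m U g \<longleftrightarrow> (\<forall>k. Ck k m U g)"

definition smooth_map ::
  "nat \<Rightarrow> (nat \<Rightarrow> real) set \<Rightarrow> nat \<Rightarrow> (nat \<Rightarrow> real) set \<Rightarrow> ((nat \<Rightarrow> real) \<Rightarrow> (nat \<Rightarrow> real)) \<Rightarrow> bool" where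
  "smooth_map m V n U F \<longleftrightarrow> (\<forall>v\<in>V. F v \<in> U) \<and> (\<forall>j<n. smooth_fun m V (\<lambda>v. F v j))"

text \<open>D n U P: P restricted to U is a plot with domain the open set U of R^n.\<close>
type_synonym 'a diffeo = "nat \<Rightarrow> (nat \<Rightarrow> real) set \<Rightarrow> ((nat \<Rightarrow> real) \<Rightarrow> 'a) \<Rightarrow> bool"

definition diffeology :: "'a set \<Rightarrow> 'a diffeo \<Rightarrow> bool" where
  "diffeology X D \<longleftrightarrow>
     (\<forall>n U P. D n U P \<longrightarrow> open_euc n U \<and> P ` U \<subseteq> X) \<and>
     (\<forall>n U P Q. D n U P \<and> (\<forall>u\<in>U. P u = Q u) \<longrightarrow> D n U Q) \<and>
     (\<forall>n U x. open_euc n U \<and> x \<in> X \<longrightarrow> D n U (\<lambda>_. x)) \<and>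
     (\<forall>n U P. open_euc n U \<and> P ` U \<subseteq> X \<and>
        (\<forall>u\<in>U. \<exists>V. u \<in> V \<and> V \<subseteq> U \<and> open_euc n V \<and> D n V P) \<longrightarrow> D n U P) \<and>
     (\<forall>n U P m V F. D n U P \<and> open_euc m V \<and> smooth_map m V n U F \<longrightarrow> D m V (P \<circ> F))"

definition dsmooth :: "'a diffeo \<Rightarrow> 'b diffeo \<Rightarrow> ('a \<Rightarrow> 'b) \<Rightarrow> bool" where
  "dsmooth DX DY f \<longleftrightarrow> (\<forall>n U P. DX n U P \<longrightarrow> DY n U (f \<circ> P))"

definition smooth_between :: "'a set \<Rightarrow> 'a diffeo \<Rightarrow> 'b set \<Rightarrow> 'b diffeo \<Rightarrow> ('a \<Rightarrow> 'b) \<Rightarrow> bool" where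
  "smooth_between X DX Y DY f \<longleftrightarrow> (\<forall>x\<in>X. f x \<in> Y) \<and> dsmooth DX DY f"

definition subset_diffeo :: "'a diffeo \<Rightarrow> 'a set \<Rightarrow> 'a diffeo" where
  "subset_diffeo D Y = (\<lambda>n U P. D n U P \<and> P ` U \<subseteq> Y)"

definition prod_diffeo :: "'a diffeo \<Rightarrow> 'b diffeo \<Rightarrow> ('a \<times> 'b) diffeo" where
  "prod_diffeo DX DY = (\<lambda>n U P. DX n U (fst \<circ> P) \<and> DY n U (snd \<circ> P))"

definition quot_diffeo :: "'a diffeo \<Rightarrow> 'b set \<Rightarrow> ('a \<Rightarrow> 'b) \<Rightarrow> 'b diffeo" where
  "quot_diffeo DX Y q = (\<lambda>n U P. open_euc n U \<and> P ` U \<subseteq> Y \<and>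
     (\<forall>u\<in>U. \<exists>V. u \<in> V \<and> V \<subseteq> U \<and> open_euc n V \<and>
        ((\<exists>c. \<forall>v\<in>V. P v = c) \<or> (\<exists>Q. DX n V Q \<and> (\<forall>v\<in>V. P v = q (Q v))))))"

definition D_open :: "'a set \<Rightarrow> 'a diffeo \<Rightarrow> 'a set \<Rightarrow> bool" where
  "D_open X D A \<longleftrightarrow> A \<subseteq> X \<and> (\<forall>n U P. D n U P \<longrightarrow> open_euc n {u\<in>U. P u \<in> A})"

text \<open>Convention: comp g h (first h, then g) is defined iff src g = tgt h.\<close>
record ('g, 'm) dgpd =
  arr :: "'g set"
  obj :: "'m set"
  src :: "'g \<Rightarrow> 'm"
  tgt :: "'g \<Rightarrow> 'm"
  ide :: "'m \<Rightarrow> 'g"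
  inv :: "'g \<Rightarrow> 'g"
  comp :: "'g \<Rightarrow> 'g \<Rightarrow> 'g"
  darr :: "'g diffeo"
  dobj :: "'m diffeo"

definition composable :: "('g, 'm, 'z) dgpd_scheme \<Rightarrow> ('g \<times> 'g) set" where
  "composable G = {(g, h). g \<in> arr G \<and> h \<in> arr G \<and> src G g = tgt G h}"

definition groupoid :: "('g, 'm, 'z) dgpd_scheme \<Rightarrow> bool" where
  "groupoid G \<longleftrightarrow>
     (\<forall>g\<in>arr G. src G g \<in> obj G \<and> tgt G g \<in> obj G) \<and>
     (\<forall>x\<in>obj G. ide G x \<in> arr G \<and> src G (ide G x) = x \<and> tgt G (ide G x) = x) \<and>
     (\<forall>(g, h)\<in>composable G. comp G g h \<in> arr G \<and> src G (comp G g h) = src G h \<and>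
         tgt G (comp G g h) = tgt G g) \<and>
     (\<forall>f\<in>arr G. \<forall>g\<in>arr G. \<forall>h\<in>arr G. src G f = tgt G g \<and> src G g = tgt G h \<longrightarrow>
         comp G (comp G f g) h = comp G f (comp G g h)) \<and>
     (\<forall>g\<in>arr G. comp G (ide G (tgt G g)) g = g \<and> comp G g (ide G (src G g)) = g) \<and>
     (\<forall>g\<in>arr G. inv G g \<in> arr G \<and> src G (inv G g) = tgt G g \<and> tgt G (inv G g) = src G g \<and>
         comp G (inv G g) g = ide G (src G g) \<and> comp G g (inv G g) = ide G (tgt G g))"

definition diffeological_groupoid :: "('g, 'm, 'z) dgpd_scheme \<Rightarrow> bool" where
  "diffeological_groupoid G \<longleftrightarrow>
     groupoid G \<and> diffeology (arr G) (darr G) \<and> diffeology (obj G) (dobj G) \<and>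
     smooth_between (arr G) (darr G) (obj G) (dobj G) (src G) \<and>
     smooth_between (arr G) (darr G) (obj G) (dobj G) (tgt G) \<and>
     smooth_between (obj G) (dobj G) (arr G) (darr G) (ide G) \<and>
     smooth_between (arr G) (darr G) (arr G) (darr G) (inv G) \<and>
     smooth_between (composable G) (subset_diffeo (prod_diffeo (darr G) (darr G)) (composable G))
        (arr G) (darr G) (\<lambda>(g, h). comp G g h)"

definition isotropy :: "('g, 'm, 'z) dgpd_scheme \<Rightarrow> 'm \<Rightarrow> 'g set" where
  "isotropy G x = {g \<in> arr G. src G g = x \<and> tgt G g = x}"

definition abelian :: "('g, 'm, 'z) dgpd_scheme \<Rightarrow> bool" where
  "abelian G \<longleftrightarrow> (\<forall>x\<in>obj G. \<forall>g\<in>isotropy G x. \<forall>h\<in>isotropy G x. comp G g h = comp G h g)"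

inductive_set commutator_subgroup :: "('g, 'm, 'z) dgpd_scheme \<Rightarrow> 'm \<Rightarrow> 'g set"
  for G x where
  unit: "ide G x \<in> commutator_subgroup G x"
| commutator: "g \<in> isotropy G x \<Longrightarrow> h \<in> isotropy G x \<Longrightarrow>
     comp G (comp G g h) (comp G (inv G g) (inv G h)) \<in> commutator_subgroup G x"
| mult: "a \<in> commutator_subgroup G x \<Longrightarrow> b \<in> commutator_subgroup G x \<Longrightarrow>
     comp G a b \<in> commutator_subgroup G x"
| inverse: "a \<in> commutator_subgroup G x \<Longrightarrow> inv G a \<in> commutator_subgroup G x"

definition comm_subgroupoid :: "('g, 'm, 'z) dgpd_scheme \<Rightarrow> 'g set" where
  "comm_subgroupoid G = (\<Union>x\<in>obj G. commutator_subgroup G x)"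

definition comm_rel :: "('g, 'm, 'z) dgpd_scheme \<Rightarrow> ('g \<times> 'g) set" where
  "comm_rel G = {(g, g'). g \<in> arr G \<and> g' \<in> arr G \<and> src G g = src G g' \<and> tgt G g = tgt G g' \<and>
                          comp G g' (inv G g) \<in> comm_subgroupoid G}"

definition abel_map :: "('g, 'm, 'z) dgpd_scheme \<Rightarrow> 'g \<Rightarrow> 'g set" where
  "abel_map G g = comm_rel G `` {g}"

definition rep :: "'g set \<Rightarrow> 'g" where
  "rep c = (SOME g. g \<in> c)"

definition abel_quot :: "('g, 'm, 'z) dgpd_scheme \<Rightarrow> ('g set, 'm) dgpd" where
  "abel_quot G =
     \<lparr> arr = arr G // comm_rel G,
       obj = obj G,
       src = (\<lambda>c. src G (rep c)),
       tgt = (\<lambda>c. tgt G (rep c)),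
       ide = (\<lambda>x. abel_map G (ide G x)),
       inv = (\<lambda>c. abel_map G (inv G (rep c))),
       comp = (\<lambda>c d. abel_map G (comp G (rep c) (rep d))),
       darr = quot_diffeo (darr G) (arr G // comm_rel G) (abel_map G),
       dobj = dobj G \<rparr>"

definition restrict_gpd :: "('g, 'm) dgpd \<Rightarrow> 'm set \<Rightarrow> ('g, 'm) dgpd" where
  "restrict_gpd G U =
     G\<lparr> arr := {g \<in> arr G. src G g \<in> U \<and> tgt G g \<in> U},
        obj := U,
        darr := subset_diffeo (darr G) {g \<in> arr G. src G g \<in> U \<and> tgt G g \<in> U},
        dobj := subset_diffeo (dobj G) U \<rparr>"

definition smooth_morphism ::
  "('g, 'm) dgpd \<Rightarrow> ('h, 'k) dgpd \<Rightarrow> ('g \<Rightarrow> 'h) \<Rightarrow> ('m \<Rightarrow> 'k) \<Rightarrow> bool" where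
  "smooth_morphism G H Phi phi \<longleftrightarrow>
     smooth_between (arr G) (darr G) (arr H) (darr H) Phi \<and>
     smooth_between (obj G) (dobj G) (obj H) (dobj H) phi \<and>
     (\<forall>g\<in>arr G. src H (Phi g) = phi (src G g) \<and> tgt H (Phi g) = phi (tgt G g)) \<and>
     (\<forall>(g, h)\<in>composable G. Phi (comp G g h) = comp H (Phi g) (Phi h))"

text \<open>(A, p) is an abelianization of G; the universal property is tested against
  all abelian diffeological groupoids H whose arrow/object types are the types
  given by the itself-arguments (the main theorem quantifies over these types).\<close>
definition is_abelianization ::
  "('g, 'm) dgpd \<Rightarrow> ('q, 'm) dgpd \<Rightarrow> ('g \<Rightarrow> 'q) \<Rightarrow> 'h itself \<Rightarrow> 'k itself \<Rightarrow> bool" where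
  "is_abelianization G A p _ _ \<longleftrightarrow>
     diffeological_groupoid A \<and> abelian A \<and> obj A = obj G \<and>
     smooth_morphism G A p id \<and> p ` arr G = arr A \<and>
     (\<forall>U (H :: ('h, 'k) dgpd) Psi psi.
        D_open (obj G) (dobj G) U \<and> diffeological_groupoid H \<and> abelian H \<and>
        smooth_morphism (restrict_gpd G U) H Psi psi \<longrightarrow>
        (\<exists>Psi' psi'. smooth_morphism (restrict_gpd A U) H Psi' psi' \<and>
           (\<forall>g\<in>arr (restrict_gpd G U). Psi' (p g) = Psi g) \<and>
           (\<forall>x\<in>U. psi' x = psi x) \<and>
           (\<forall>Psi'' psi''. smooth_morphism (restrict_gpd A U) H Psi'' psi'' \<and>
              (\<forall>g\<in>arr (restrict_gpd G U). Psi'' (p g) = Psi g) \<and>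
              (\<forall>x\<in>U. psi'' x = psi x) \<longrightarrow>
              (\<forall>c\<in>arr (restrict_gpd A U). Psi'' c = Psi' c) \<and> (\<forall>x\<in>U. psi'' x = psi' x))))"

end

theory Submission
  imports Defs
begin

locale gpd =
  fixes G :: "('g, 'm, 'z) dgpd_scheme"
  assumes gp: "groupoid G"
begin

lemma src_arr[simp]: "g \<in> arr G \<Longrightarrow> src G g \<in> obj G"
  and tgt_arr[simp]: "g \<in> arr G \<Longrightarrow> tgt G g \<in> obj G"
  using gp unfolding groupoid_def by auto

lemma ide_arr[simp]: "x \<in> obj G \<Longrightarrow> ide G x \<in> arr G"
  and src_ide[simp]: "x \<in> obj G \<Longrightarrow> src G (ide G x) = x"
  and tgt_ide[simp]: "x \<in> obj G \<Longrightarrow> tgt G (ide G x) = x"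
  using gp unfolding groupoid_def by auto

lemma comp_arr[simp]: "g \<in> arr G \<Longrightarrow> h \<in> arr G \<Longrightarrow> src G g = tgt G h \<Longrightarrow> comp G g h \<in> arr G"
  and src_comp[simp]: "g \<in> arr G \<Longrightarrow> h \<in> arr G \<Longrightarrow> src G g = tgt G h \<Longrightarrow> src G (comp G g h) = src G h"
  and tgt_comp[simp]: "g \<in> arr G \<Longrightarrow> h \<in> arr G \<Longrightarrow> src G g = tgt G h \<Longrightarrow> tgt G (comp G g h) = tgt G g"
  using gp unfolding groupoid_def composable_def by auto

lemma assoc[simp]: "f \<in> arr G \<Longrightarrow> g \<in> arr G \<Longrightarrow> h \<in> arr G \<Longrightarrow> src G f = tgt G g \<Longrightarrow> src G g = tgt G h \<Longrightarrow>
   comp G (comp G f g) h = comp G f (comp G g h)"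
  using gp unfolding groupoid_def by blast

lemma comp_ide_l[simp]: "g \<in> arr G \<Longrightarrow> x = tgt G g \<Longrightarrow> comp G (ide G x) g = g"
  and comp_ide_r[simp]: "g \<in> arr G \<Longrightarrow> x = src G g \<Longrightarrow> comp G g (ide G x) = g"
  using gp unfolding groupoid_def by auto

lemma inv_arr[simp]: "g \<in> arr G \<Longrightarrow> inv G g \<in> arr G"
  and src_inv[simp]: "g \<in> arr G \<Longrightarrow> src G (inv G g) = tgt G g"
  and tgt_inv[simp]: "g \<in> arr G \<Longrightarrow> tgt G (inv G g) = src G g"
  and inv_l[simp]: "g \<in> arr G \<Longrightarrow> comp G (inv G g) g = ide G (src G g)"
  and inv_r[simp]: "g \<in> arr G \<Longrightarrow> comp G g (inv G g) = ide G (tgt G g)"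
  using gp unfolding groupoid_def by auto

lemma cancel_l[simp]: "g \<in> arr G \<Longrightarrow> h \<in> arr G \<Longrightarrow> src G g = tgt G h \<Longrightarrow> comp G (inv G g) (comp G g h) = h"
proof -
  assume a: "g \<in> arr G" "h \<in> arr G" "src G g = tgt G h"
  have "comp G (inv G g) (comp G g h) = comp G (comp G (inv G g) g) h"
    using a by (subst assoc) auto
  then show ?thesis using a by simp
qed

lemma cancel_r[simp]: "g \<in> arr G \<Longrightarrow> h \<in> arr G \<Longrightarrow> tgt G g = tgt G h \<Longrightarrow> comp G g (comp G (inv G g) h) = h"
proof -
  assume a: "g \<in> arr G" "h \<in> arr G" "tgt G g = tgt G h"
  have "comp G g (comp G (inv G g) h) = comp G (comp G g (inv G g)) h"
    using a by (subst assoc) auto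
  then show ?thesis using a by simp
qed

lemma inv_unique: "a \<in> arr G \<Longrightarrow> b \<in> arr G \<Longrightarrow> src G a = tgt G b \<Longrightarrow> comp G a b = ide G (tgt G a) \<Longrightarrow> b = inv G a"
proof -
  assume a: "a \<in> arr G" "b \<in> arr G" "src G a = tgt G b" "comp G a b = ide G (tgt G a)"
  have "b = comp G (inv G a) (comp G a b)" using a(1,2,3) cancel_l by metis
  also have "\<dots> = inv G a" using a(1,4) by (metis comp_ide_r inv_arr src_inv)
  finally show ?thesis .
qed

lemma inv_inv[simp]: "g \<in> arr G \<Longrightarrow> inv G (inv G g) = g"
  by (rule inv_unique[symmetric]) auto

lemma inv_comp[simp]: "g \<in> arr G \<Longrightarrow> h \<in> arr G \<Longrightarrow> src G g = tgt G h \<Longrightarrow> inv G (comp G g h) = comp G (inv G h) (inv G g)"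
  by (rule inv_unique[symmetric]) auto

lemma inv_ide[simp]: "x \<in> obj G \<Longrightarrow> inv G (ide G x) = ide G x"
  by (rule inv_unique[symmetric]) auto

lemma CS_iso: "n \<in> commutator_subgroup G x \<Longrightarrow> x \<in> obj G \<Longrightarrow> n \<in> arr G \<and> src G n = x \<and> tgt G n = x"
  by (induction rule: commutator_subgroup.induct) (auto simp: isotropy_def)

lemma CS_conj: "n \<in> commutator_subgroup G x \<Longrightarrow> g \<in> arr G \<Longrightarrow> src G g = x \<Longrightarrow>
   comp G g (comp G n (inv G g)) \<in> commutator_subgroup G (tgt G g)"
proof (induction rule: commutator_subgroup.induct)
  case unit
  then show ?case using commutator_subgroup.unit[of G "tgt G g"] by simp
next
  case (commutator a b)
  let ?a = "comp G g (comp G a (inv G g))" and ?b = "comp G g (comp G b (inv G g))"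
  have iso: "?a \<in> isotropy G (tgt G g)" "?b \<in> isotropy G (tgt G g)"
    using commutator by (auto simp: isotropy_def)
  have "comp G (comp G ?a ?b) (comp G (inv G ?a) (inv G ?b)) \<in> commutator_subgroup G (tgt G g)"
    by (rule commutator_subgroup.commutator[OF iso])
  moreover have "comp G (comp G ?a ?b) (comp G (inv G ?a) (inv G ?b)) =
     comp G g (comp G (comp G (comp G a b) (comp G (inv G a) (inv G b))) (inv G g))"
    using commutator by (auto simp: isotropy_def)
  ultimately show ?case by simp
next
  case (mult a b)
  have x: "x \<in> obj G" using mult by auto
  note ia = CS_iso[OF mult(1) x] and ib = CS_iso[OF mult(2) x]
  have "comp G (comp G g (comp G a (inv G g))) (comp G g (comp G b (inv G g))) \<in> commutator_subgroup G (tgt G g)"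
    using mult by (auto intro!: commutator_subgroup.mult)
  moreover have "comp G (comp G g (comp G a (inv G g))) (comp G g (comp G b (inv G g))) =
     comp G g (comp G (comp G a b) (inv G g))"
    using ia ib mult by auto
  ultimately show ?case by simp
next
  case (inverse a)
  have x: "x \<in> obj G" using inverse by auto
  note ia = CS_iso[OF inverse(1) x]
  have "inv G (comp G g (comp G a (inv G g))) \<in> commutator_subgroup G (tgt G g)"
    using inverse by (auto intro!: commutator_subgroup.inverse)
  moreover have "inv G (comp G g (comp G a (inv G g))) = comp G g (comp G (inv G a) (inv G g))"
    using ia inverse by auto
  ultimately show ?case by simp
qed


lemma CSG_D: "n \<in> comm_subgroupoid G \<Longrightarrow> n \<in> commutator_subgroup G (tgt G n) \<and> n \<in> arr G \<and> src G n = tgt G n"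
  unfolding comm_subgroupoid_def using CS_iso by fastforce

lemma CSG_I: "x \<in> obj G \<Longrightarrow> n \<in> commutator_subgroup G x \<Longrightarrow> n \<in> comm_subgroupoid G"
  unfolding comm_subgroupoid_def by auto

lemma R_D: "(g, g') \<in> comm_rel G \<Longrightarrow> g \<in> arr G \<and> g' \<in> arr G \<and> src G g = src G g' \<and> tgt G g = tgt G g' \<and>
   comp G g' (inv G g) \<in> commutator_subgroup G (tgt G g)"
  unfolding comm_rel_def using CSG_D by fastforce

lemma R_I: "g \<in> arr G \<Longrightarrow> g' \<in> arr G \<Longrightarrow> src G g = src G g' \<Longrightarrow> tgt G g = tgt G g' \<Longrightarrow>
   comp G g' (inv G g) \<in> commutator_subgroup G (tgt G g) \<Longrightarrow> (g, g') \<in> comm_rel G"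
  unfolding comm_rel_def using CSG_I[of "tgt G g"] tgt_arr by auto

lemma R_refl: "g \<in> arr G \<Longrightarrow> (g, g) \<in> comm_rel G"
  by (rule R_I) (auto intro: commutator_subgroup.unit)

lemma R_sym: "(g, g') \<in> comm_rel G \<Longrightarrow> (g', g) \<in> comm_rel G"
proof -
  assume r: "(g, g') \<in> comm_rel G"
  note d = R_D[OF r]
  have "inv G (comp G g' (inv G g)) \<in> commutator_subgroup G (tgt G g)"
    by (rule commutator_subgroup.inverse) (use d in auto)
  moreover have "inv G (comp G g' (inv G g)) = comp G g (inv G g')" using d by simp
  ultimately show ?thesis using d by (intro R_I) auto
qed

lemma R_trans: "(g, g') \<in> comm_rel G \<Longrightarrow> (g', g'') \<in> comm_rel G \<Longrightarrow> (g, g'') \<in> comm_rel G"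
proof -
  assume r: "(g, g') \<in> comm_rel G" "(g', g'') \<in> comm_rel G"
  note d = R_D[OF r(1)] R_D[OF r(2)]
  have "comp G (comp G g'' (inv G g')) (comp G g' (inv G g)) \<in> commutator_subgroup G (tgt G g)"
    by (rule commutator_subgroup.mult) (use d in auto)
  moreover have "comp G (comp G g'' (inv G g')) (comp G g' (inv G g)) = comp G g'' (inv G g)" using d by simp
  ultimately show ?thesis using d by (intro R_I) auto
qed

lemma equiv_R: "equiv (arr G) (comm_rel G)"
  unfolding equiv_def refl_on_def sym_def trans_def
proof (intro conjI allI impI ballI)
  show "comm_rel G \<subseteq> arr G \<times> arr G" using R_D by auto
qed (auto intro: R_refl R_sym R_trans)

lemma abel_map_eq: "g \<in> arr G \<Longrightarrow> g' \<in> arr G \<Longrightarrow> abel_map G g = abel_map G g' \<longleftrightarrow> (g, g') \<in> comm_rel G"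
  unfolding abel_map_def using equiv_class_eq_iff[OF equiv_R] by metis

lemma abel_map_in: "g \<in> arr G \<Longrightarrow> abel_map G g \<in> arr G // comm_rel G"
  unfolding abel_map_def by (rule quotientI)

lemma quot_cases: "c \<in> arr G // comm_rel G \<Longrightarrow> (\<And>g. g \<in> arr G \<Longrightarrow> c = abel_map G g \<Longrightarrow> P) \<Longrightarrow> P"
  unfolding abel_map_def by (erule quotientE) blast

lemma rep_abel: "g \<in> arr G \<Longrightarrow> (g, rep (abel_map G g)) \<in> comm_rel G"
proof -
  assume g: "g \<in> arr G"
  have "g \<in> abel_map G g" unfolding abel_map_def using R_refl[OF g] by auto
  then have "rep (abel_map G g) \<in> abel_map G g" unfolding rep_def by (rule someI)
  then show ?thesis unfolding abel_map_def by auto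
qed

lemma rep_abel_arr[simp]: "g \<in> arr G \<Longrightarrow> rep (abel_map G g) \<in> arr G"
  and rep_abel_src[simp]: "g \<in> arr G \<Longrightarrow> src G (rep (abel_map G g)) = src G g"
  and rep_abel_tgt[simp]: "g \<in> arr G \<Longrightarrow> tgt G (rep (abel_map G g)) = tgt G g"
  using R_D[OF rep_abel] by auto

lemma abel_rep[simp]: "g \<in> arr G \<Longrightarrow> abel_map G (rep (abel_map G g)) = abel_map G g"
  using abel_map_eq rep_abel R_sym by (metis rep_abel_arr)

lemma comp_resp: "(g, g') \<in> comm_rel G \<Longrightarrow> (h, h') \<in> comm_rel G \<Longrightarrow> src G g = tgt G h \<Longrightarrow>
  (comp G g h, comp G g' h') \<in> comm_rel G"
proof -
  assume r: "(g, g') \<in> comm_rel G" "(h, h') \<in> comm_rel G" and c: "src G g = tgt G h"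
  note d = R_D[OF r(1)] R_D[OF r(2)]
  have m: "comp G g (comp G (comp G h' (inv G h)) (inv G g)) \<in> commutator_subgroup G (tgt G g)"
    by (rule CS_conj) (use d c in auto)
  have "comp G (comp G g' (inv G g)) (comp G g (comp G (comp G h' (inv G h)) (inv G g))) \<in> commutator_subgroup G (tgt G g)"
    by (rule commutator_subgroup.mult) (use d m in auto)
  moreover have "comp G (comp G g' (inv G g)) (comp G g (comp G (comp G h' (inv G h)) (inv G g)))
     = comp G (comp G g' h') (inv G (comp G g h))" using d c by simp
  ultimately show ?thesis using d c by (intro R_I) auto
qed

lemma inv_resp: "(g, g') \<in> comm_rel G \<Longrightarrow> (inv G g, inv G g') \<in> comm_rel G"
proof -
  assume r: "(g, g') \<in> comm_rel G"
  note d = R_D[OF r]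
  have i: "inv G (comp G g' (inv G g)) \<in> commutator_subgroup G (tgt G g)"
    by (rule commutator_subgroup.inverse) (use d in auto)
  have "comp G (inv G g) (comp G (inv G (comp G g' (inv G g))) (inv G (inv G g))) \<in> commutator_subgroup G (tgt G (inv G g))"
    by (rule CS_conj) (use d i in auto)
  moreover have "comp G (inv G g) (comp G (inv G (comp G g' (inv G g))) (inv G (inv G g))) = comp G (inv G g') (inv G (inv G g))"
    using d by simp
  ultimately show ?thesis using d by (intro R_I) auto
qed


lemma AQ_simps[simp]: "arr (abel_quot G) = arr G // comm_rel G" "obj (abel_quot G) = obj G"
  "dobj (abel_quot G) = dobj G" "darr (abel_quot G) = quot_diffeo (darr G) (arr G // comm_rel G) (abel_map G)"
  "ide (abel_quot G) x = abel_map G (ide G x)"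
  unfolding abel_quot_def by simp_all

lemma srcA[simp]: "g \<in> arr G \<Longrightarrow> src (abel_quot G) (abel_map G g) = src G g"
  and tgtA[simp]: "g \<in> arr G \<Longrightarrow> tgt (abel_quot G) (abel_map G g) = tgt G g"
  unfolding abel_quot_def by simp_all

lemma invA[simp]: "g \<in> arr G \<Longrightarrow> inv (abel_quot G) (abel_map G g) = abel_map G (inv G g)"
  unfolding abel_quot_def apply simp
  by (metis R_D abel_map_eq inv_arr inv_resp rep_abel)

lemma compA[simp]: "g \<in> arr G \<Longrightarrow> h \<in> arr G \<Longrightarrow> src G g = tgt G h \<Longrightarrow>
   comp (abel_quot G) (abel_map G g) (abel_map G h) = abel_map G (comp G g h)"
proof -
  assume a: "g \<in> arr G" "h \<in> arr G" "src G g = tgt G h"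
  have "(comp G g h, comp G (rep (abel_map G g)) (rep (abel_map G h))) \<in> comm_rel G"
    using a by (intro comp_resp rep_abel) auto
  then show ?thesis unfolding abel_quot_def using a
    by simp (metis R_sym abel_map_eq R_D)
qed

lemma groupoid_A: "groupoid (abel_quot G)"
proof -
  let ?A = "abel_quot G"
  have 1: "\<forall>c\<in>arr ?A. src ?A c \<in> obj ?A \<and> tgt ?A c \<in> obj ?A"
    by (auto elim!: quot_cases)
  have 2: "\<forall>x\<in>obj ?A. ide ?A x \<in> arr ?A \<and> src ?A (ide ?A x) = x \<and> tgt ?A (ide ?A x) = x"
    by (auto simp: abel_map_in)
  have 3: "\<forall>(c, d)\<in>composable ?A. comp ?A c d \<in> arr ?A \<and> src ?A (comp ?A c d) = src ?A d \<and>
         tgt ?A (comp ?A c d) = tgt ?A c"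
  proof (clarsimp simp only: composable_def mem_Collect_eq case_prod_conv split_paired_all)
    fix c d assume "c \<in> arr ?A" "d \<in> arr ?A" "src ?A c = tgt ?A d"
    then show "comp ?A c d \<in> arr ?A \<and> src ?A (comp ?A c d) = src ?A d \<and> tgt ?A (comp ?A c d) = tgt ?A c"
      by (auto elim!: quot_cases simp: abel_map_in)
  qed
  have 4: "\<forall>c\<in>arr ?A. \<forall>d\<in>arr ?A. \<forall>e\<in>arr ?A. src ?A c = tgt ?A d \<and> src ?A d = tgt ?A e \<longrightarrow>
         comp ?A (comp ?A c d) e = comp ?A c (comp ?A d e)"
    by (auto elim!: quot_cases)
  have 5: "\<forall>c\<in>arr ?A. comp ?A (ide ?A (tgt ?A c)) c = c \<and> comp ?A c (ide ?A (src ?A c)) = c"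
    by (auto elim!: quot_cases)
  have 6: "\<forall>c\<in>arr ?A. inv ?A c \<in> arr ?A \<and> src ?A (inv ?A c) = tgt ?A c \<and> tgt ?A (inv ?A c) = src ?A c \<and>
         comp ?A (inv ?A c) c = ide ?A (src ?A c) \<and> comp ?A c (inv ?A c) = ide ?A (tgt ?A c)"
    by (auto elim!: quot_cases simp: abel_map_in)
  show ?thesis unfolding groupoid_def using 1 2 3 4 5 6 by blast
qed

lemma abelian_A: "abelian (abel_quot G)"
  unfolding abelian_def
proof (intro ballI)
  fix x c d assume x: "x \<in> obj (abel_quot G)" and c: "c \<in> isotropy (abel_quot G) x" and d: "d \<in> isotropy (abel_quot G) x"
  obtain g where g: "g \<in> arr G" "c = abel_map G g" using c unfolding isotropy_def by (metis (no_types, lifting) AQ_simps(1) mem_Collect_eq quot_cases)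
  obtain h where h: "h \<in> arr G" "d = abel_map G h" using d unfolding isotropy_def by (metis (no_types, lifting) AQ_simps(1) mem_Collect_eq quot_cases)
  have s: "src G g = x" "tgt G g = x" "src G h = x" "tgt G h = x" using c d g h unfolding isotropy_def by auto
  have iso: "h \<in> isotropy G x" "g \<in> isotropy G x" using s g h unfolding isotropy_def by auto
  have "comp G (comp G h g) (comp G (inv G h) (inv G g)) \<in> commutator_subgroup G x"
    by (rule commutator_subgroup.commutator[OF iso])
  moreover have "comp G (comp G h g) (comp G (inv G h) (inv G g)) = comp G (comp G h g) (inv G (comp G g h))"
    using inv_comp[of g h] s g h by metis
  moreover have "comp G g h \<in> arr G" "comp G h g \<in> arr G" "src G (comp G g h) = x" "src G (comp G h g) = x"
     "tgt G (comp G g h) = x" "tgt G (comp G h g) = x"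
    using s g h by simp_all
  ultimately have "(comp G g h, comp G h g) \<in> comm_rel G" by (intro R_I) simp_all
  then show "comp (abel_quot G) c d = comp (abel_quot G) d c"
    using g h s abel_map_eq[of "comp G g h" "comp G h g"] by simp
qed

end

lemma Ck_mono: "Ck k m U g \<Longrightarrow> W \<subseteq> U \<Longrightarrow> Ck k m W g"
proof (induction k arbitrary: g)
  case 0 then show ?case by (auto intro: continuous_on_subset)
next
  case (Suc k) then show ?case by (auto intro: continuous_on_subset)
qed

lemma smooth_map_mono: "smooth_map m V n U F \<Longrightarrow> W \<subseteq> V \<Longrightarrow> F ` W \<subseteq> U' \<Longrightarrow> smooth_map m W n U' F"
  unfolding smooth_map_def smooth_fun_def using Ck_mono by blast

lemma partial_d_const: "partial_d i (\<lambda>_. c) = (\<lambda>_. 0)"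
  unfolding partial_d_def by (rule ext) (rule DERIV_imp_deriv, rule DERIV_const)

lemma Ck_const: "Ck k m U (\<lambda>_. c)"
  by (induction k arbitrary: c) (auto simp: partial_d_const)

lemma partial_d_coord: "partial_d i (\<lambda>v. v j) = (\<lambda>_. if i = j then 1 else 0)"
proof (rule ext)
  fix x :: "nat \<Rightarrow> real"
  show "partial_d i (\<lambda>v. v j) x = (if i = j then 1 else 0)"
  proof (cases "i = j")
    case True
    have "DERIV (\<lambda>t. x i + t) 0 :> 1" by (auto intro!: derivative_eq_intros)
    then show ?thesis unfolding partial_d_def using True by (simp add: DERIV_imp_deriv)
  next
    case False
    have "DERIV (\<lambda>t. x j) 0 :> 0" by (auto intro!: derivative_eq_intros)
    then show ?thesis unfolding partial_d_def using False by (simp add: DERIV_imp_deriv)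
  qed
qed

lemma Ck_coord: "Ck k m U (\<lambda>v. v j)"
proof (cases k)
  case 0 then show ?thesis using continuous_on_subset[OF continuous_on_product_coordinates] by simp
next
  case (Suc k')
  have d: "(\<lambda>t. if j = i then x i + t else x j) differentiable (at (0::real))" for x :: "nat \<Rightarrow> real" and i
    by (cases "i = j") (auto intro!: derivative_intros)
  show ?thesis using Suc
    using continuous_on_subset[OF continuous_on_product_coordinates]
    by (auto simp: partial_d_coord d intro: Ck_const)
qed

lemma smooth_id: "V \<subseteq> U \<Longrightarrow> smooth_map n V n U id"
  unfolding smooth_map_def smooth_fun_def using Ck_coord by auto

lemma diffeoD1: "diffeology X D \<Longrightarrow> \<forall>n U P. D n U P \<longrightarrow> open_euc n U \<and> P ` U \<subseteq> X"
  unfolding diffeology_def by (drule conjunct1)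
lemma diffeoD2: "diffeology X D \<Longrightarrow> \<forall>n U P Q. D n U P \<and> (\<forall>u\<in>U. P u = Q u) \<longrightarrow> D n U Q"
  unfolding diffeology_def by (drule conjunct2, drule conjunct1)
lemma diffeoD3: "diffeology X D \<Longrightarrow> \<forall>n U x. open_euc n U \<and> x \<in> X \<longrightarrow> D n U (\<lambda>_. x)"
  unfolding diffeology_def by (drule conjunct2, drule conjunct2, drule conjunct1)
lemma diffeoD4: "diffeology X D \<Longrightarrow> \<forall>n U P. open_euc n U \<and> P ` U \<subseteq> X \<and>
        (\<forall>u\<in>U. \<exists>V. u \<in> V \<and> V \<subseteq> U \<and> open_euc n V \<and> D n V P) \<longrightarrow> D n U P"
  unfolding diffeology_def by (drule conjunct2, drule conjunct2, drule conjunct2, drule conjunct1)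
lemma diffeoD5: "diffeology X D \<Longrightarrow> \<forall>n U P m V F. D n U P \<and> open_euc m V \<and> smooth_map m V n U F \<longrightarrow> D m V (P \<circ> F)"
  unfolding diffeology_def by (drule conjunct2, drule conjunct2, drule conjunct2, drule conjunct2)

lemma plot_open: "diffeology X D \<Longrightarrow> D n U P \<Longrightarrow> open_euc n U"
  using diffeoD1[rule_format, of X D n U P] by simp
lemma plot_img: "diffeology X D \<Longrightarrow> D n U P \<Longrightarrow> u \<in> U \<Longrightarrow> P u \<in> X"
  using diffeoD1[rule_format, of X D n U P] by auto

lemma plot_ext: "diffeology X D \<Longrightarrow> D n U P \<Longrightarrow> (\<And>u. u \<in> U \<Longrightarrow> P u = Q u) \<Longrightarrow> D n U Q"
  using diffeoD2[rule_format, of X D n U P Q] by simp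

lemma plot_const: "diffeology X D \<Longrightarrow> open_euc n U \<Longrightarrow> x \<in> X \<Longrightarrow> D n U (\<lambda>_. x)"
  using diffeoD3[rule_format, of X D n U x] by simp

lemma plot_local: "diffeology X D \<Longrightarrow> open_euc n U \<Longrightarrow> P ` U \<subseteq> X \<Longrightarrow>
   (\<And>u. u \<in> U \<Longrightarrow> \<exists>V. u \<in> V \<and> V \<subseteq> U \<and> open_euc n V \<and> D n V P) \<Longrightarrow> D n U P"
  using diffeoD4[rule_format, of X D n U P] by simp

lemma plot_comp: "diffeology X D \<Longrightarrow> D n U P \<Longrightarrow> open_euc m V \<Longrightarrow> smooth_map m V n U F \<Longrightarrow> D m V (P \<circ> F)"
  using diffeoD5[rule_format, of X D n U P m V F] by simp

lemma plot_restrict: "diffeology X D \<Longrightarrow> D n U P \<Longrightarrow> open_euc n V \<Longrightarrow> V \<subseteq> U \<Longrightarrow> D n V P"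
  using plot_comp[of X D n U P n V id] smooth_id by simp

lemma open_euc_Int: "open_euc n U \<Longrightarrow> open_euc n V \<Longrightarrow> open_euc n (U \<inter> V)"
  unfolding open_euc_def by auto

lemma smooth_cont: "smooth_map m V n U F \<Longrightarrow> open_euc n U \<Longrightarrow> continuous_on V F"
proof (rule continuous_on_coordinatewise_then_product)
  fix j assume s: "smooth_map m V n U F" and o: "open_euc n U"
  show "continuous_on V (\<lambda>x. F x j)"
  proof (cases "j < n")
    case True
    then show ?thesis using s unfolding smooth_map_def smooth_fun_def by (metis Ck.simps(1))
  next
    case False
    have "\<forall>v\<in>V. F v j = 0" using s o False unfolding smooth_map_def open_euc_def euc_def by auto
    then show ?thesis using continuous_on_cong[of V V "\<lambda>x. F x j" "\<lambda>_. 0"] by simp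
  qed
qed

lemma open_preimage: "open_euc m V \<Longrightarrow> smooth_map m V n U F \<Longrightarrow> open_euc n U \<Longrightarrow> open_euc n O' \<Longrightarrow>
   open_euc m {v \<in> V. F v \<in> O'}"
proof -
  assume V: "open_euc m V" and s: "smooth_map m V n U F" and U: "open_euc n U" and O': "open_euc n O'"
  have c: "continuous_on V F" using smooth_cont[OF s U] .
  obtain T where T: "open T" "O' = euc n \<inter> T" using O' unfolding open_euc_def openin_open by blast
  obtain S where S: "open S" "V = euc m \<inter> S" using V unfolding open_euc_def openin_open by blast
  obtain A where A: "open A" "A \<inter> V = F -` T \<inter> V" using c T(1) unfolding continuous_on_open_invariant by blast
  have FV: "F v \<in> euc n" if "v \<in> V" for v using s U that unfolding smooth_map_def open_euc_def by auto
  have "{v \<in> V. F v \<in> O'} = euc m \<inter> (S \<inter> A)" using A S T FV by auto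
  then show ?thesis unfolding open_euc_def openin_open using S A by auto
qed

abbreviation "loc_cond D q n V P \<equiv> (\<exists>c. \<forall>v\<in>V. P v = c) \<or> (\<exists>Q. D n V Q \<and> (\<forall>v\<in>V. P v = q (Q v)))"

lemma QD_I: "open_euc n U \<Longrightarrow> P ` U \<subseteq> Y \<Longrightarrow>
   (\<And>u. u \<in> U \<Longrightarrow> \<exists>V. u \<in> V \<and> V \<subseteq> U \<and> open_euc n V \<and> loc_cond D q n V P) \<Longrightarrow>
   quot_diffeo D Y q n U P"
  unfolding quot_diffeo_def by blast

lemma QD_open: "quot_diffeo D Y q n U P \<Longrightarrow> open_euc n U"
  and QD_img: "quot_diffeo D Y q n U P \<Longrightarrow> P ` U \<subseteq> Y"
  and QD_loc: "quot_diffeo D Y q n U P \<Longrightarrow> u \<in> U \<Longrightarrow> \<exists>V. u \<in> V \<and> V \<subseteq> U \<and> open_euc n V \<and> loc_cond D q n V P"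
  unfolding quot_diffeo_def by blast+

lemma QD_ext: assumes P: "quot_diffeo D Y q n U P" and e: "\<forall>u\<in>U. P u = Q u"
  shows "quot_diffeo D Y q n U Q"
proof (rule QD_I)
  show "open_euc n U" using QD_open[OF P] .
  show "Q ` U \<subseteq> Y" using QD_img[OF P] e by auto
  fix u assume u: "u \<in> U"
  obtain V where V: "u \<in> V" "V \<subseteq> U" "open_euc n V" "loc_cond D q n V P" using QD_loc[OF P u] by blast
  have e': "\<forall>v\<in>V. Q v = P v" using e V(2) by auto
  have "loc_cond D q n V Q"
    using V(4)
  proof
    assume "\<exists>c. \<forall>v\<in>V. P v = c" then show ?thesis using e' by auto
  next
    assume "\<exists>Q'. D n V Q' \<and> (\<forall>v\<in>V. P v = q (Q' v))" then show ?thesis using e' by auto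
  qed
  then show "\<exists>V. u \<in> V \<and> V \<subseteq> U \<and> open_euc n V \<and> loc_cond D q n V Q" using V by blast
qed

lemma QD_const: "open_euc n U \<Longrightarrow> y \<in> Y \<Longrightarrow> quot_diffeo D Y q n U (\<lambda>_. y)"
  apply (rule QD_I)
  apply assumption
  apply blast
  subgoal for u apply (rule exI[of _ U]) by blast
  done

lemma QD_local: assumes U: "open_euc n U" and img: "P ` U \<subseteq> Y"
    and l: "\<forall>u\<in>U. \<exists>V. u \<in> V \<and> V \<subseteq> U \<and> open_euc n V \<and> quot_diffeo D Y q n V P"
  shows "quot_diffeo D Y q n U P"
proof (rule QD_I[OF U img])
  fix u assume u: "u \<in> U"
  obtain V where V: "u \<in> V" "V \<subseteq> U" "quot_diffeo D Y q n V P" using l u by blast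
  obtain W where W: "u \<in> W" "W \<subseteq> V" "open_euc n W" "loc_cond D q n W P" using QD_loc[OF V(3) V(1)] by blast
  have "W \<subseteq> U" using W(2) V(2) by blast
  then show "\<exists>V. u \<in> V \<and> V \<subseteq> U \<and> open_euc n V \<and> loc_cond D q n V P"
    using W(1,3,4) by blast
qed

lemma QD_comp: assumes X: "diffeology X D" and P: "quot_diffeo D Y q n U P" and V: "open_euc m V" and F: "smooth_map m V n U F"
  shows "quot_diffeo D Y q m V (P \<circ> F)"
proof -
  have U: "open_euc n U" using QD_open[OF P] .
  have FV: "\<And>v. v \<in> V \<Longrightarrow> F v \<in> U" using F unfolding smooth_map_def by blast
  show ?thesis
  proof (rule QD_I[OF V])
    show "(P \<circ> F) ` V \<subseteq> Y" using QD_img[OF P] FV by auto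
    fix v assume v: "v \<in> V"
    obtain W where W: "F v \<in> W" "W \<subseteq> U" "open_euc n W" "loc_cond D q n W P"
      using QD_loc[OF P FV[OF v]] by blast
    define W' where "W' = {w \<in> V. F w \<in> W}"
    have W'o: "open_euc m W'" unfolding W'_def by (rule open_preimage[OF V F U W(3)])
    have FW: "smooth_map m W' n W F" unfolding W'_def by (rule smooth_map_mono[OF F]) auto
    have "loc_cond D q m W' (P \<circ> F)"
      using W(4)
    proof
      assume "\<exists>c. \<forall>w\<in>W. P w = c"
      then obtain c where "\<forall>w\<in>W. P w = c" by blast
      then have "\<forall>w\<in>W'. (P \<circ> F) w = c" unfolding W'_def by auto
      then show ?thesis by blast
    next
      assume "\<exists>Q. D n W Q \<and> (\<forall>w\<in>W. P w = q (Q w))"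
      then obtain Q where Q: "D n W Q" "\<forall>w\<in>W. P w = q (Q w)" by blast
      have "D m W' (Q \<circ> F)" by (rule plot_comp[OF X Q(1) W'o FW])
      moreover have "\<forall>w\<in>W'. (P \<circ> F) w = q ((Q \<circ> F) w)" using Q(2) unfolding W'_def by auto
      ultimately show ?thesis by blast
    qed
    moreover have "v \<in> W'" "W' \<subseteq> V" using v W(1) unfolding W'_def by auto
    ultimately show "\<exists>V'. v \<in> V' \<and> V' \<subseteq> V \<and> open_euc m V' \<and> loc_cond D q m V' (P \<circ> F)"
      using W'o by blast
  qed
qed

lemma quot_diffeology:
  assumes X: "diffeology X D"
  shows "diffeology Y (quot_diffeo D Y q)"
  unfolding diffeology_def
  apply (intro conjI allI impI; (elim conjE)?)
  subgoal using QD_open by blast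
  subgoal using QD_img by blast
  subgoal by (rule QD_ext)
  subgoal by (rule QD_const)
  subgoal by (rule QD_local)
  subgoal by (rule QD_comp[OF X])
  done

lemma quot_of_plot: "diffeology X D \<Longrightarrow> D n U Q \<Longrightarrow> (\<And>x. x \<in> X \<Longrightarrow> q x \<in> Y) \<Longrightarrow>
   (\<And>u. u \<in> U \<Longrightarrow> P u = q (Q u)) \<Longrightarrow> quot_diffeo D Y q n U P"
  apply (rule QD_I)
  subgoal using plot_open by blast
  subgoal using plot_img by fastforce
  subgoal for u apply (rule exI[of _ U]) using plot_open by fastforce
  done

lemma quot_lift_local:
  assumes X: "diffeology X D" and P: "quot_diffeo D Y q n U P" and Y: "Y \<subseteq> q ` X" and u: "u \<in> U"
  shows "\<exists>V. u \<in> V \<and> V \<subseteq> U \<and> open_euc n V \<and> (\<exists>Q. D n V Q \<and> (\<forall>v\<in>V. P v = q (Q v)))"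
proof -
  obtain V where V: "u \<in> V" "V \<subseteq> U" "open_euc n V" "loc_cond D q n V P" using QD_loc[OF P u] by blast
  have "\<exists>Q. D n V Q \<and> (\<forall>v\<in>V. P v = q (Q v))"
    using V(4)
  proof
    assume "\<exists>c. \<forall>v\<in>V. P v = c"
    then obtain c where c: "\<forall>v\<in>V. P v = c" by blast
    have "c \<in> Y" using c V(1,2) QD_img[OF P] by (metis image_subset_iff subsetD)
    then obtain x where x: "x \<in> X" "c = q x" using Y by auto
    show ?thesis using plot_const[OF X V(3) x(1)] c x by auto
  qed
  then show ?thesis using V by blast
qed

lemma quot_induce:
  assumes X: "diffeology X D" and Z: "diffeology Z DZ" and P: "quot_diffeo D Y q n U P"
    and S: "P ` U \<subseteq> S" and SY: "S \<subseteq> Y" and Y: "Y \<subseteq> q ` X" and fS: "\<And>y. y \<in> S \<Longrightarrow> f y \<in> Z"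
    and h: "\<And>V Q. open_euc n V \<Longrightarrow> D n V Q \<Longrightarrow> (\<And>v. v \<in> V \<Longrightarrow> q (Q v) \<in> S) \<Longrightarrow> DZ n V (\<lambda>v. f (q (Q v)))"
  shows "DZ n U (f \<circ> P)"
proof (rule plot_local[OF Z QD_open[OF P]])
  show "(f \<circ> P) ` U \<subseteq> Z" using S fS by auto
  fix u assume u: "u \<in> U"
  obtain V Q where V: "u \<in> V" "V \<subseteq> U" "open_euc n V" "D n V Q" "\<forall>v\<in>V. P v = q (Q v)"
    using quot_lift_local[OF X P Y u] by blast
  have "DZ n V (\<lambda>v. f (q (Q v)))" using h[OF V(3) V(4)] V S by force
  then have "DZ n V (f \<circ> P)" by (rule plot_ext[OF Z]) (use V in auto)
  then show "\<exists>V. u \<in> V \<and> V \<subseteq> U \<and> open_euc n V \<and> DZ n V (f \<circ> P)" using V by blast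
qed

locale dgp = gpd G for G :: "('g, 'm) dgpd" +
  assumes dg: "diffeological_groupoid G"
begin

lemma DA: "diffeology (arr G) (darr G)" and DO: "diffeology (obj G) (dobj G)"
  and sm_src: "smooth_between (arr G) (darr G) (obj G) (dobj G) (src G)"
  and sm_tgt: "smooth_between (arr G) (darr G) (obj G) (dobj G) (tgt G)"
  and sm_ide: "smooth_between (obj G) (dobj G) (arr G) (darr G) (ide G)"
  and sm_inv: "smooth_between (arr G) (darr G) (arr G) (darr G) (inv G)"
  and sm_comp: "smooth_between (composable G) (subset_diffeo (prod_diffeo (darr G) (darr G)) (composable G))
        (arr G) (darr G) (\<lambda>(g, h). comp G g h)"
  using dg unfolding diffeological_groupoid_def by blast+

lemma plotG: "darr G n V Q \<Longrightarrow> v \<in> V \<Longrightarrow> Q v \<in> arr G"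
  using plot_img[OF DA] by blast

lemma quot_eq: "arr G // comm_rel G = abel_map G ` arr G"
  unfolding quotient_def abel_map_def by auto

lemma DAq: "diffeology (arr G // comm_rel G) (quot_diffeo (darr G) (arr G // comm_rel G) (abel_map G))"
  by (rule quot_diffeology[OF DA])

lemma abel_plot: "darr G n U Q \<Longrightarrow> (\<And>u. u \<in> U \<Longrightarrow> P u = abel_map G (Q u)) \<Longrightarrow>
   quot_diffeo (darr G) (arr G // comm_rel G) (abel_map G) n U P"
  by (rule quot_of_plot[OF DA]) (auto simp: abel_map_in)

lemma src_sm_A: "smooth_between (arr (abel_quot G)) (darr (abel_quot G)) (obj (abel_quot G)) (dobj (abel_quot G)) (src (abel_quot G))"
  unfolding smooth_between_def dsmooth_def
proof (intro conjI allI impI ballI)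
  fix c assume "c \<in> arr (abel_quot G)" then show "src (abel_quot G) c \<in> obj (abel_quot G)"
    by (auto elim: quot_cases)
next
  fix n U P assume P: "darr (abel_quot G) n U P"
  show "dobj (abel_quot G) n U (src (abel_quot G) \<circ> P)"
    unfolding AQ_simps
  proof (rule quot_induce[OF DA DO P[unfolded AQ_simps]])
    show "P ` U \<subseteq> arr G // comm_rel G" using QD_img[OF P[unfolded AQ_simps]] .
    show "arr G // comm_rel G \<subseteq> abel_map G ` arr G" using quot_eq by simp
    show "\<And>y. y \<in> arr G // comm_rel G \<Longrightarrow> src (abel_quot G) y \<in> obj G" by (auto elim: quot_cases)
    fix V Q assume V: "open_euc n V" and Q: "darr G n V Q"
    have "dobj G n V (src G \<circ> Q)" using sm_src Q unfolding smooth_between_def dsmooth_def by blast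
    then show "dobj G n V (\<lambda>v. src (abel_quot G) (abel_map G (Q v)))"
      by (rule plot_ext[OF DO]) (simp add: plotG[OF Q])
  qed simp
qed

lemma tgt_sm_A: "smooth_between (arr (abel_quot G)) (darr (abel_quot G)) (obj (abel_quot G)) (dobj (abel_quot G)) (tgt (abel_quot G))"
  unfolding smooth_between_def dsmooth_def
proof (intro conjI allI impI ballI)
  fix c assume "c \<in> arr (abel_quot G)" then show "tgt (abel_quot G) c \<in> obj (abel_quot G)"
    by (auto elim: quot_cases)
next
  fix n U P assume P: "darr (abel_quot G) n U P"
  show "dobj (abel_quot G) n U (tgt (abel_quot G) \<circ> P)"
    unfolding AQ_simps
  proof (rule quot_induce[OF DA DO P[unfolded AQ_simps]])
    show "P ` U \<subseteq> arr G // comm_rel G" using QD_img[OF P[unfolded AQ_simps]] .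
    show "arr G // comm_rel G \<subseteq> abel_map G ` arr G" using quot_eq by simp
    show "\<And>y. y \<in> arr G // comm_rel G \<Longrightarrow> tgt (abel_quot G) y \<in> obj G" by (auto elim: quot_cases)
    fix V Q assume V: "open_euc n V" and Q: "darr G n V Q"
    have "dobj G n V (tgt G \<circ> Q)" using sm_tgt Q unfolding smooth_between_def dsmooth_def by blast
    then show "dobj G n V (\<lambda>v. tgt (abel_quot G) (abel_map G (Q v)))"
      by (rule plot_ext[OF DO]) (simp add: plotG[OF Q])
  qed simp
qed

lemma ide_sm_A: "smooth_between (obj (abel_quot G)) (dobj (abel_quot G)) (arr (abel_quot G)) (darr (abel_quot G)) (ide (abel_quot G))"
  unfolding smooth_between_def dsmooth_def
proof (intro conjI allI impI ballI)
  fix x assume "x \<in> obj (abel_quot G)" then show "ide (abel_quot G) x \<in> arr (abel_quot G)"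
    by (auto simp: abel_map_in)
next
  fix n U P assume P: "dobj (abel_quot G) n U P"
  have "darr G n U (ide G \<circ> P)" using sm_ide P unfolding smooth_between_def dsmooth_def by simp
  then show "darr (abel_quot G) n U (ide (abel_quot G) \<circ> P)"
    unfolding AQ_simps by (rule abel_plot) simp
qed

lemma inv_sm_A: "smooth_between (arr (abel_quot G)) (darr (abel_quot G)) (arr (abel_quot G)) (darr (abel_quot G)) (inv (abel_quot G))"
  unfolding smooth_between_def dsmooth_def
proof (intro conjI allI impI ballI)
  fix c assume "c \<in> arr (abel_quot G)" then show "inv (abel_quot G) c \<in> arr (abel_quot G)"
    by (auto elim!: quot_cases simp: abel_map_in)
next
  fix n U P assume P: "darr (abel_quot G) n U P"
  show "darr (abel_quot G) n U (inv (abel_quot G) \<circ> P)"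
    unfolding AQ_simps
  proof (rule quot_induce[OF DA DAq P[unfolded AQ_simps]])
    show "P ` U \<subseteq> arr G // comm_rel G" using QD_img[OF P[unfolded AQ_simps]] .
    show "arr G // comm_rel G \<subseteq> abel_map G ` arr G" using quot_eq by simp
    show "\<And>y. y \<in> arr G // comm_rel G \<Longrightarrow> inv (abel_quot G) y \<in> arr G // comm_rel G"
      by (auto elim!: quot_cases simp: abel_map_in)
    fix V Q assume V: "open_euc n V" and Q: "darr G n V Q"
    have "darr G n V (inv G \<circ> Q)" using sm_inv Q unfolding smooth_between_def dsmooth_def by blast
    then show "quot_diffeo (darr G) (arr G // comm_rel G) (abel_map G) n V (\<lambda>v. inv (abel_quot G) (abel_map G (Q v)))"
      by (rule abel_plot) (simp add: plotG[OF Q])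
  qed simp
qed


lemma compA_arr: "c \<in> arr G // comm_rel G \<Longrightarrow> d \<in> arr G // comm_rel G \<Longrightarrow> src (abel_quot G) c = tgt (abel_quot G) d \<Longrightarrow>
  comp (abel_quot G) c d \<in> arr G // comm_rel G"
  by (auto elim!: quot_cases simp: abel_map_in)

lemma compA_arr': "p \<in> composable (abel_quot G) \<Longrightarrow> (case p of (c, d) \<Rightarrow> comp (abel_quot G) c d) \<in> arr G // comm_rel G"
  unfolding composable_def using compA_arr by auto

lemma comp_sm_A: "smooth_between (composable (abel_quot G))
   (subset_diffeo (prod_diffeo (darr (abel_quot G)) (darr (abel_quot G))) (composable (abel_quot G)))
   (arr (abel_quot G)) (darr (abel_quot G)) (\<lambda>(c, d). comp (abel_quot G) c d)"
  unfolding smooth_between_def dsmooth_def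
proof (intro conjI allI impI ballI)
  fix p assume "p \<in> composable (abel_quot G)"
  then show "(case p of (c, d) \<Rightarrow> comp (abel_quot G) c d) \<in> arr (abel_quot G)"
    using compA_arr' by simp
next
  fix n U P assume P: "subset_diffeo (prod_diffeo (darr (abel_quot G)) (darr (abel_quot G))) (composable (abel_quot G)) n U P"
  let ?Y = "arr G // comm_rel G"
  let ?QD = "quot_diffeo (darr G) ?Y (abel_map G)"
  have P1: "?QD n U (fst \<circ> P)" and P2: "?QD n U (snd \<circ> P)" and Pc: "P ` U \<subseteq> composable (abel_quot G)"
    using P unfolding subset_diffeo_def prod_diffeo_def by simp_all
  have Yq: "?Y \<subseteq> abel_map G ` arr G" using quot_eq by simp
  show "darr (abel_quot G) n U ((\<lambda>(c, d). comp (abel_quot G) c d) \<circ> P)"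
    unfolding AQ_simps
  proof (rule QD_I)
    show "open_euc n U" using QD_open[OF P1] .
    show "((\<lambda>(c, d). comp (abel_quot G) c d) \<circ> P) ` U \<subseteq> ?Y"
    proof (rule image_subsetI)
      fix v assume "v \<in> U"
      then have "P v \<in> composable (abel_quot G)" using Pc by blast
      then show "((\<lambda>(c, d). comp (abel_quot G) c d) \<circ> P) v \<in> ?Y" using compA_arr' by simp
    qed
    fix u assume u: "u \<in> U"
    obtain V1 Q1 where V1: "u \<in> V1" "V1 \<subseteq> U" "open_euc n V1" "darr G n V1 Q1" "\<forall>v\<in>V1. (fst \<circ> P) v = abel_map G (Q1 v)"
      using quot_lift_local[OF DA P1 Yq u] by blast
    obtain V2 Q2 where V2: "u \<in> V2" "V2 \<subseteq> U" "open_euc n V2" "darr G n V2 Q2" "\<forall>v\<in>V2. (snd \<circ> P) v = abel_map G (Q2 v)"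
      using quot_lift_local[OF DA P2 Yq u] by blast
    define V where "V = V1 \<inter> V2"
    have Vo: "open_euc n V" unfolding V_def by (rule open_euc_Int[OF V1(3) V2(3)])
    have Q1: "darr G n V Q1" by (rule plot_restrict[OF DA V1(4) Vo]) (auto simp: V_def)
    have Q2: "darr G n V Q2" by (rule plot_restrict[OF DA V2(4) Vo]) (auto simp: V_def)
    have a1: "Q1 v \<in> arr G" and a2: "Q2 v \<in> arr G" if "v \<in> V" for v using plotG[OF Q1 that] plotG[OF Q2 that] by auto
    have e1: "fst (P v) = abel_map G (Q1 v)" and e2: "snd (P v) = abel_map G (Q2 v)" if "v \<in> V" for v
      using V1(5) V2(5) that unfolding V_def by auto
    have cmp: "src G (Q1 v) = tgt G (Q2 v)" if v: "v \<in> V" for v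
    proof -
      have "P v \<in> composable (abel_quot G)" using Pc v V1(2) unfolding V_def by auto
      then have "src (abel_quot G) (fst (P v)) = tgt (abel_quot G) (snd (P v))"
        unfolding composable_def by (auto split: prod.splits)
      then show ?thesis using e1[OF v] e2[OF v] a1[OF v] a2[OF v] by simp
    qed
    let ?R = "\<lambda>v. (Q1 v, Q2 v)"
    have R: "subset_diffeo (prod_diffeo (darr G) (darr G)) (composable G) n V ?R"
      unfolding subset_diffeo_def prod_diffeo_def composable_def
      using Q1 Q2 a1 a2 cmp by (auto simp: o_def)
    have "darr G n V ((\<lambda>(g, h). comp G g h) \<circ> ?R)"
      using sm_comp R unfolding smooth_between_def dsmooth_def by blast
    then have RC: "darr G n V (\<lambda>v. comp G (Q1 v) (Q2 v))" by (simp add: o_def)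
    have "\<forall>v\<in>V. ((\<lambda>(c, d). comp (abel_quot G) c d) \<circ> P) v = abel_map G (comp G (Q1 v) (Q2 v))"
    proof
      fix v assume v: "v \<in> V"
      have "((\<lambda>(c, d). comp (abel_quot G) c d) \<circ> P) v = comp (abel_quot G) (fst (P v)) (snd (P v))"
        by (simp add: case_prod_beta)
      also have "\<dots> = abel_map G (comp G (Q1 v) (Q2 v))"
        using e1[OF v] e2[OF v] a1[OF v] a2[OF v] cmp[OF v] by simp
      finally show "((\<lambda>(c, d). comp (abel_quot G) c d) \<circ> P) v = abel_map G (comp G (Q1 v) (Q2 v))" .
    qed
    then have "loc_cond (darr G) (abel_map G) n V ((\<lambda>(c, d). comp (abel_quot G) c d) \<circ> P)"
      using RC by blast
    moreover have "u \<in> V" "V \<subseteq> U" using V1 V2 unfolding V_def by auto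
    ultimately show "\<exists>V. u \<in> V \<and> V \<subseteq> U \<and> open_euc n V \<and>
       loc_cond (darr G) (abel_map G) n V ((\<lambda>(c, d). comp (abel_quot G) c d) \<circ> P)"
      using Vo by blast
  qed
qed

lemma dg_A: "diffeological_groupoid (abel_quot G)"
  unfolding diffeological_groupoid_def
  apply (intro conjI)
  apply (rule groupoid_A)
  apply (simp only: AQ_simps, rule DAq)
  apply (simp only: AQ_simps, rule DO)
  apply (rule src_sm_A)
  apply (rule tgt_sm_A)
  apply (rule ide_sm_A)
  apply (rule inv_sm_A)
  apply (rule comp_sm_A)
  done

lemma p_smooth: "smooth_morphism G (abel_quot G) (abel_map G) id"
proof -
  have 1: "smooth_between (arr G) (darr G) (arr (abel_quot G)) (darr (abel_quot G)) (abel_map G)"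
    unfolding smooth_between_def dsmooth_def AQ_simps
    by (auto simp: abel_map_in intro: abel_plot)
  have 2: "smooth_between (obj G) (dobj G) (obj (abel_quot G)) (dobj (abel_quot G)) id"
    unfolding smooth_between_def dsmooth_def by simp
  have 3: "\<forall>g\<in>arr G. src (abel_quot G) (abel_map G g) = id (src G g) \<and> tgt (abel_quot G) (abel_map G g) = id (tgt G g)"
    by simp
  have 4: "\<forall>(g, h)\<in>composable G. abel_map G (comp G g h) = comp (abel_quot G) (abel_map G g) (abel_map G h)"
    unfolding composable_def by auto
  show ?thesis unfolding smooth_morphism_def using 1 2 3 4 by blast
qed

end

lemma RG_simps[simp]: "arr (restrict_gpd G U) = {g \<in> arr G. src G g \<in> U \<and> tgt G g \<in> U}"
  "obj (restrict_gpd G U) = U" "src (restrict_gpd G U) = src G" "tgt (restrict_gpd G U) = tgt G"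
  "comp (restrict_gpd G U) = comp G" "inv (restrict_gpd G U) = inv G" "ide (restrict_gpd G U) = ide G"
  "darr (restrict_gpd G U) = subset_diffeo (darr G) {g \<in> arr G. src G g \<in> U \<and> tgt G g \<in> U}"
  "dobj (restrict_gpd G U) = subset_diffeo (dobj G) U"
  unfolding restrict_gpd_def by simp_all

context dgp
begin

context
  fixes H :: "('h, 'k) dgpd" and U Psi psi
  assumes H: "diffeological_groupoid H" and Hab: "abelian H"
    and sm: "smooth_morphism (restrict_gpd G U) H Psi psi"
begin

interpretation H: gpd H using H unfolding diffeological_groupoid_def gpd_def by blast

lemma Psi_arr: "g \<in> arr G \<Longrightarrow> src G g \<in> U \<Longrightarrow> tgt G g \<in> U \<Longrightarrow> Psi g \<in> arr H"
  and Psi_src: "g \<in> arr G \<Longrightarrow> src G g \<in> U \<Longrightarrow> tgt G g \<in> U \<Longrightarrow> src H (Psi g) = psi (src G g)"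
  and Psi_tgt: "g \<in> arr G \<Longrightarrow> src G g \<in> U \<Longrightarrow> tgt G g \<in> U \<Longrightarrow> tgt H (Psi g) = psi (tgt G g)"
  using sm unfolding smooth_morphism_def smooth_between_def by auto

lemma psi_obj: "x \<in> U \<Longrightarrow> psi x \<in> obj H"
  using sm unfolding smooth_morphism_def smooth_between_def by auto

lemma Psi_comp: "g \<in> arr G \<Longrightarrow> src G g \<in> U \<Longrightarrow> tgt G g \<in> U \<Longrightarrow> h \<in> arr G \<Longrightarrow> src G h \<in> U \<Longrightarrow> tgt G h \<in> U \<Longrightarrow>
  src G g = tgt G h \<Longrightarrow> Psi (comp G g h) = comp H (Psi g) (Psi h)"
proof -
  assume a: "g \<in> arr G" "src G g \<in> U" "tgt G g \<in> U" "h \<in> arr G" "src G h \<in> U" "tgt G h \<in> U" "src G g = tgt G h"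
  have "(g, h) \<in> composable (restrict_gpd G U)" using a unfolding composable_def by simp
  moreover have "\<forall>(g, h)\<in>composable (restrict_gpd G U). Psi (comp (restrict_gpd G U) g h) = comp H (Psi g) (Psi h)"
    using sm unfolding smooth_morphism_def by blast
  ultimately show ?thesis by auto
qed

lemma Psi_ide: "y \<in> U \<Longrightarrow> y \<in> obj G \<Longrightarrow> Psi (ide G y) = ide H (psi y)"
proof -
  assume y: "y \<in> U" "y \<in> obj G"
  let ?e = "Psi (ide G y)"
  have e: "?e \<in> arr H" "src H ?e = psi y" "tgt H ?e = psi y"
    using y Psi_arr Psi_src Psi_tgt by auto
  have ee: "comp H ?e ?e = ?e" using Psi_comp[of "ide G y" "ide G y"] y by simp
  have "?e = comp H (inv H ?e) (comp H ?e ?e)" using e by simp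
  also have "\<dots> = comp H (inv H ?e) ?e" using ee by simp
  also have "\<dots> = ide H (psi y)" using e by simp
  finally show ?thesis .
qed

lemma Psi_inv: "g \<in> arr G \<Longrightarrow> src G g \<in> U \<Longrightarrow> tgt G g \<in> U \<Longrightarrow> Psi (inv G g) = inv H (Psi g)"
proof -
  assume g: "g \<in> arr G" "src G g \<in> U" "tgt G g \<in> U"
  have "comp H (Psi g) (Psi (inv G g)) = Psi (comp G g (inv G g))"
    by (rule Psi_comp[symmetric]) (use g in simp_all)
  also have "\<dots> = ide H (tgt H (Psi g))" using g by (simp add: Psi_ide Psi_tgt)
  finally have c: "comp H (Psi g) (Psi (inv G g)) = ide H (tgt H (Psi g))" .
  show ?thesis
    by (rule H.inv_unique) (use g c Psi_arr Psi_src Psi_tgt in auto)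
qed

lemma Psi_CS: "n \<in> commutator_subgroup G x \<Longrightarrow> x \<in> U \<Longrightarrow> x \<in> obj G \<Longrightarrow> Psi n = ide H (psi x)"
proof (induction rule: commutator_subgroup.induct)
  case unit
  then show ?case by (rule Psi_ide)
next
  case (commutator g h)
  have g: "g \<in> arr G" "src G g = x" "tgt G g = x" and h: "h \<in> arr G" "src G h = x" "tgt G h = x"
    using commutator unfolding isotropy_def by auto
  let ?a = "Psi g" and ?b = "Psi h"
  have a: "?a \<in> arr H" "src H ?a = psi x" "tgt H ?a = psi x" using g commutator Psi_arr Psi_src Psi_tgt by auto
  have b: "?b \<in> arr H" "src H ?b = psi x" "tgt H ?b = psi x" using h commutator Psi_arr Psi_src Psi_tgt by auto
  have px: "psi x \<in> obj H" using psi_obj commutator by auto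
  have ab: "comp H ?a ?b = comp H ?b ?a"
    using Hab px a b unfolding abelian_def isotropy_def by auto
  have x: "x \<in> U" "x \<in> obj G" using commutator by auto
  have 1: "Psi (comp G g h) = comp H ?a ?b" by (rule Psi_comp) (use g h x in simp_all)
  have 2: "Psi (comp G (inv G g) (inv G h)) = comp H (Psi (inv G g)) (Psi (inv G h))"
    by (rule Psi_comp) (use g h x in simp_all)
  have 3: "Psi (inv G g) = inv H ?a" "Psi (inv G h) = inv H ?b" by (rule Psi_inv; use g h x in simp)+
  have 4: "Psi (comp G (comp G g h) (comp G (inv G g) (inv G h))) =
     comp H (Psi (comp G g h)) (Psi (comp G (inv G g) (inv G h)))"
    by (rule Psi_comp) (use g h x in simp_all)
  have "Psi (comp G (comp G g h) (comp G (inv G g) (inv G h))) =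
     comp H (comp H ?a ?b) (comp H (inv H ?a) (inv H ?b))"
    unfolding 4 1 2 3 ..
  also have "\<dots> = comp H (comp H ?b ?a) (comp H (inv H ?a) (inv H ?b))" using ab by simp
  also have "\<dots> = ide H (psi x)"
  proof -
    have "comp H (comp H ?b ?a) (comp H (inv H ?a) (inv H ?b)) = comp H ?b (comp H ?a (comp H (inv H ?a) (inv H ?b)))"
      using a b by (simp del: H.assoc add: H.assoc[of ?b ?a])
    also have "\<dots> = comp H ?b (inv H ?b)" using a b by simp
    also have "\<dots> = ide H (psi x)" using b by simp
    finally show ?thesis .
  qed
  finally show ?case .
next
  case (mult a b)
  note ia = CS_iso[OF mult(1) mult(6)] and ib = CS_iso[OF mult(2) mult(6)]
  have "Psi (comp G a b) = comp H (Psi a) (Psi b)" by (rule Psi_comp) (use ia ib mult in simp_all)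
  then show ?case using mult psi_obj by simp
next
  case (inverse a)
  note ia = CS_iso[OF inverse(1) inverse(4)]
  have "Psi (inv G a) = inv H (Psi a)" by (rule Psi_inv) (use ia inverse in simp_all)
  then show ?case using inverse psi_obj by simp
qed


lemma Psi_resp: "(g, g') \<in> comm_rel G \<Longrightarrow> src G g \<in> U \<Longrightarrow> tgt G g \<in> U \<Longrightarrow> Psi g = Psi g'"
proof -
  assume r: "(g, g') \<in> comm_rel G" and U: "src G g \<in> U" "tgt G g \<in> U"
  note d = R_D[OF r]
  let ?n = "comp G g' (inv G g)"
  have x: "tgt G g \<in> obj G" using d by simp
  note ni = CS_iso[OF conjunct2[OF conjunct2[OF conjunct2[OF conjunct2[OF d]]]] x]
  have gn: "comp G ?n g = g'" using d by simp
  have "Psi g' = Psi (comp G ?n g)" using gn by simp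
  also have "\<dots> = comp H (Psi ?n) (Psi g)" by (rule Psi_comp) (use ni d U in simp_all)
  also have "Psi ?n = ide H (psi (tgt G g))"
    by (rule Psi_CS[OF conjunct2[OF conjunct2[OF conjunct2[OF conjunct2[OF d]]]]]) (use U x in simp_all)
  also have "comp H (ide H (psi (tgt G g))) (Psi g) = Psi g"
    using d U Psi_arr Psi_tgt by simp
  finally show ?thesis by simp
qed

lemma rep_props: "c \<in> arr G // comm_rel G \<Longrightarrow> rep c \<in> arr G \<and> c = abel_map G (rep c)"
  by (erule quot_cases) simp

lemma A_defs: "src (abel_quot G) c = src G (rep c)" "tgt (abel_quot G) c = tgt G (rep c)"
  "comp (abel_quot G) c d = abel_map G (comp G (rep c) (rep d))"
  unfolding abel_quot_def by simp_all

lemma Psi'_abel: "g \<in> arr G \<Longrightarrow> src G g \<in> U \<Longrightarrow> tgt G g \<in> U \<Longrightarrow> Psi (rep (abel_map G g)) = Psi g"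
  using Psi_resp[OF rep_abel] by metis

lemma Psi_sm: "darr G n V Q \<Longrightarrow> (\<And>v. v \<in> V \<Longrightarrow> src G (Q v) \<in> U \<and> tgt G (Q v) \<in> U) \<Longrightarrow> darr H n V (Psi \<circ> Q)"
proof -
  assume Q: "darr G n V Q" and s: "\<And>v. v \<in> V \<Longrightarrow> src G (Q v) \<in> U \<and> tgt G (Q v) \<in> U"
  have "subset_diffeo (darr G) {g \<in> arr G. src G g \<in> U \<and> tgt G g \<in> U} n V Q"
    unfolding subset_diffeo_def using Q s plotG[OF Q] by auto
  then show ?thesis using sm unfolding smooth_morphism_def smooth_between_def dsmooth_def by simp
qed

lemma univ_exists: "smooth_morphism (restrict_gpd (abel_quot G) U) H (\<lambda>c. Psi (rep c)) psi"
proof -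
  let ?A = "abel_quot G"
  let ?S = "{c \<in> arr G // comm_rel G. src ?A c \<in> U \<and> tgt ?A c \<in> U}"
  have repS: "rep c \<in> arr G" "src G (rep c) \<in> U" "tgt G (rep c) \<in> U" if "c \<in> ?S" for c
  proof -
    have c: "c \<in> arr G // comm_rel G" "src ?A c \<in> U" "tgt ?A c \<in> U" using that by auto
    show "rep c \<in> arr G" using rep_props[OF c(1)] by blast
    show "src G (rep c) \<in> U" using c(2) unfolding A_defs .
    show "tgt G (rep c) \<in> U" using c(3) unfolding A_defs .
  qed
  have DH: "diffeology (arr H) (darr H)" using H unfolding diffeological_groupoid_def by blast
  have 1: "smooth_between ?S (subset_diffeo (quot_diffeo (darr G) (arr G // comm_rel G) (abel_map G)) ?S)
      (arr H) (darr H) (\<lambda>c. Psi (rep c))"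
    unfolding smooth_between_def dsmooth_def
  proof (intro conjI ballI allI impI)
    fix c assume "c \<in> ?S" then show "Psi (rep c) \<in> arr H" using repS Psi_arr by blast
  next
    fix n V P assume P: "subset_diffeo (quot_diffeo (darr G) (arr G // comm_rel G) (abel_map G)) ?S n V P"
    have Pq: "quot_diffeo (darr G) (arr G // comm_rel G) (abel_map G) n V P" and PS: "P ` V \<subseteq> ?S"
      using P unfolding subset_diffeo_def by simp_all
    show "darr H n V ((\<lambda>c. Psi (rep c)) \<circ> P)"
    proof (rule quot_induce[OF DA DH Pq PS])
      show "?S \<subseteq> arr G // comm_rel G" by blast
      show "arr G // comm_rel G \<subseteq> abel_map G ` arr G" using quot_eq by simp
      show "\<And>y. y \<in> ?S \<Longrightarrow> Psi (rep y) \<in> arr H" using repS Psi_arr by blast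
      fix W Q assume W: "open_euc n W" and Q: "darr G n W Q" and QS: "\<And>w. w \<in> W \<Longrightarrow> abel_map G (Q w) \<in> ?S"
      have s: "src G (Q w) \<in> U \<and> tgt G (Q w) \<in> U" if "w \<in> W" for w
        using QS[OF that] plotG[OF Q that] by simp
      have "darr H n W (Psi \<circ> Q)" by (rule Psi_sm[OF Q s])
      then show "darr H n W (\<lambda>w. Psi (rep (abel_map G (Q w))))"
        by (rule plot_ext[OF DH]) (use s plotG[OF Q] Psi'_abel in simp)
    qed
  qed
  have 2: "smooth_between U (subset_diffeo (dobj G) U) (obj H) (dobj H) psi"
    using sm unfolding smooth_morphism_def by simp
  have 3: "\<forall>c\<in>?S. src H (Psi (rep c)) = psi (src ?A c) \<and> tgt H (Psi (rep c)) = psi (tgt ?A c)"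
  proof
    fix c assume c: "c \<in> ?S"
    show "src H (Psi (rep c)) = psi (src ?A c) \<and> tgt H (Psi (rep c)) = psi (tgt ?A c)"
      unfolding A_defs using Psi_src[OF repS[OF c]] Psi_tgt[OF repS[OF c]] by simp
  qed
  have 4: "Psi (rep (comp ?A c d)) = comp H (Psi (rep c)) (Psi (rep d))"
    if c: "c \<in> ?S" and d: "d \<in> ?S" and cd: "src ?A c = tgt ?A d" for c d
  proof -
    note rc = repS[OF c] and rd = repS[OF d]
    have cd': "src G (rep c) = tgt G (rep d)" using cd A_defs by simp
    have "Psi (rep (comp ?A c d)) = Psi (rep (abel_map G (comp G (rep c) (rep d))))" using A_defs by simp
    also have "\<dots> = Psi (comp G (rep c) (rep d))" by (rule Psi'_abel) (use rc rd cd' in simp_all)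
    also have "\<dots> = comp H (Psi (rep c)) (Psi (rep d))" by (rule Psi_comp) (use rc rd cd' in simp_all)
    finally show "Psi (rep (comp ?A c d)) = comp H (Psi (rep c)) (Psi (rep d))" .
  qed
  have 4: "\<forall>(c, d)\<in>composable (restrict_gpd ?A U). Psi (rep (comp ?A c d)) = comp H (Psi (rep c)) (Psi (rep d))"
    unfolding composable_def RG_simps AQ_simps using 4 by blast
  show ?thesis unfolding smooth_morphism_def RG_simps AQ_simps using 1 2 3 4 by simp
qed

end

lemma main: "diffeological_groupoid (abel_quot G) \<and>
         is_abelianization G (abel_quot G) (abel_map G) TYPE('h) TYPE('k)"
proof -
  let ?A = "abel_quot G"
  have U: "\<exists>Psi' psi'. smooth_morphism (restrict_gpd ?A U) H Psi' psi' \<and>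
           (\<forall>g\<in>arr (restrict_gpd G U). Psi' (abel_map G g) = Psi g) \<and>
           (\<forall>x\<in>U. psi' x = psi x) \<and>
           (\<forall>Psi'' psi''. smooth_morphism (restrict_gpd ?A U) H Psi'' psi'' \<and>
              (\<forall>g\<in>arr (restrict_gpd G U). Psi'' (abel_map G g) = Psi g) \<and>
              (\<forall>x\<in>U. psi'' x = psi x) \<longrightarrow>
              (\<forall>c\<in>arr (restrict_gpd ?A U). Psi'' c = Psi' c) \<and> (\<forall>x\<in>U. psi'' x = psi' x))"
    if H: "diffeological_groupoid H" and Hab: "abelian H" and sm: "smooth_morphism (restrict_gpd G U) H Psi psi"
    for U and H :: "('h, 'k) dgpd" and Psi psi
  proof (intro exI conjI)
    show "smooth_morphism (restrict_gpd ?A U) H (\<lambda>c. Psi (rep c)) psi" by (rule univ_exists[OF H Hab sm])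
    show "\<forall>g\<in>arr (restrict_gpd G U). Psi (rep (abel_map G g)) = Psi g"
      using Psi'_abel[OF H Hab sm] by simp
    show "\<forall>x\<in>U. psi x = psi x" by simp
    show "\<forall>Psi'' psi''. smooth_morphism (restrict_gpd ?A U) H Psi'' psi'' \<and>
              (\<forall>g\<in>arr (restrict_gpd G U). Psi'' (abel_map G g) = Psi g) \<and>
              (\<forall>x\<in>U. psi'' x = psi x) \<longrightarrow>
              (\<forall>c\<in>arr (restrict_gpd ?A U). Psi'' c = Psi (rep c)) \<and> (\<forall>x\<in>U. psi'' x = psi x)"
    proof (intro allI impI conjI ballI; (elim conjE)?)
      fix Psi'' psi'' c
      assume e: "\<forall>g\<in>arr (restrict_gpd G U). Psi'' (abel_map G g) = Psi g" and c: "c \<in> arr (restrict_gpd ?A U)"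
      have c': "c \<in> arr G // comm_rel G" "src G (rep c) \<in> U" "tgt G (rep c) \<in> U"
        using c A_defs(1)[OF H Hab sm, of c] A_defs(2)[OF H Hab sm, of c] by auto
      note r = rep_props[OF H Hab sm c'(1)]
      have "Psi'' c = Psi'' (abel_map G (rep c))" using r by simp
      also have "\<dots> = Psi (rep c)"
      proof -
        have "rep c \<in> arr (restrict_gpd G U)" using r c' by simp
        then show ?thesis using e by blast
      qed
      finally show "Psi'' c = Psi (rep c)" .
    qed simp
  qed
  have iA: "abel_map G ` arr G = arr ?A" using quot_eq by simp
  show ?thesis
    unfolding is_abelianization_def
    using dg_A abelian_A p_smooth iA U by simp
qed

end

theorem mainTheorem14:
  fixes G :: "('g, 'm) dgpd"
  assumes "diffeological_groupoid G"
  shows "diffeological_groupoid (abel_quot G) \<and>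
         is_abelianization G (abel_quot G) (abel_map G) TYPE('h) TYPE('k)"
proof -
  interpret dgp G
    using assms unfolding dgp_def dgp_axioms_def gpd_def diffeological_groupoid_def by blast
  show ?thesis by (rule main)
qed

end
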